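(* Let $\mathcal{N}=(D,P)$ be a broadcast network with client $P=(Q,I,\delta)$, let $G$ be its associated graph, and let $V_1,V_2$ be vertices of $G$. There is a path from $V_1$ to $V_2$ in $G$ if and only if there is a path in normal form from $V_1$ to $V_2$ in $G$.
   Context: A broadcast network is a pair $\mathcal{N}=(D,P)$ where $D$ is a finite set of messages and $P=(Q,I,\delta)$ is a finite automaton with transition relation $\delta\subseteq Q\times \mathrm{Ops}(D)\times Q$, $\mathrm{Ops}(D)=\{!a,\ ?a : a\in D\}$; write $q\xrightarrow{o}q'$ for $(q,o,q')\in\delta$. For $S\subseteq Q$ and $a\in D$ let $\mathrm{Post}_{?a}(S)=\{r'\in Q: \exists r\in S,\ r\xrightarrow{?a}r'\}$ and $\mathrm{Enabled}_{?a}(S)=\{r\in S : \mathrm{Post}_{?a}(\{r\})\neq\emptyset\}$. The graph $G=(V,\to_G)$ has vertex set $V=\bigcup_{k\le|Q|}(2^Q)^k$. There is an edge $(S_1,\dots,S_k)\to_G(S'_1,\dots,S'_k)$ iff: (1) there are $j\in[1..k]$, $s\in S_j$, $s'\in S'_j$, $a\in D$ with $s\xrightarrow{!a}s'$; (2) for each $i\in[1..k]$ there are $\mathrm{Gen}_i\subseteq\mathrm{Post}_{?a}(S_i)$ and $\mathrm{Kill}_i\subseteq\mathrm{Enabled}_{?a}(S_i)$ such that $S'_i=(S_i\setminus\mathrm{Kill}_i)\cup\mathrm{Gen}_i$ for $i\neq j$ and $S'_j=(U_j\setminus\mathrm{Kill}_j)\cup\mathrm{Gen}_j\cup\{s'\}$,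 where $U_j$ is either $S_j$ or $S_j\setminus\{s\}$; (3) for each $i$ and each $q\in\mathrm{Kill}_i$, $\mathrm{Post}_{?a}(\{q\})\cap\mathrm{Gen}_i\neq\emptyset$. A path is a finite sequence of vertices with consecutive ones joined by edges (possibly of length zero). A path $W_1\to_G\cdots\to_G W_n$ is in normal form if there is $m\in[1..n]$ such that $W_i\sqsubseteq W_{i+1}$ for all $i\in[1..m-1]$ and $W_i\sqsupseteq W_{i+1}$ for all $i\in[m..n-1]$, where $\sqsubseteq$ is componentwise inclusion of tuples of sets. *)

theory Defs
  imports Main
begin

datatype 'd op = Send 'd | Recv 'd

definition ops :: "'d set \<Rightarrow> 'd op set" where
  "ops D = Send ` D \<union> Recv ` D"

definition broadcast_network ::
  "'d set \<Rightarrow> 'q set \<Rightarrow> 'q set \<Rightarrow> ('q \<times> 'd op \<times> 'q) set \<Rightarrow> bool" where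
  "broadcast_network D Q I \<delta> \<longleftrightarrow> finite D \<and> finite Q \<and> I \<subseteq> Q \<and>
     \<delta> \<subseteq> Q \<times> ops D \<times> Q"

definition Post_recv :: "('q \<times> 'd op \<times> 'q) set \<Rightarrow> 'd \<Rightarrow> 'q set \<Rightarrow> 'q set" where
  "Post_recv \<delta> a S = {r'. \<exists>r\<in>S. (r, Recv a, r') \<in> \<delta>}"

definition Enabled_recv :: "('q \<times> 'd op \<times> 'q) set \<Rightarrow> 'd \<Rightarrow> 'q set \<Rightarrow> 'q set" where
  "Enabled_recv \<delta> a S = {r\<in>S. Post_recv \<delta> a {r} \<noteq> {}}"

definition vertices :: "'q set \<Rightarrow> 'q set list set" where
  "vertices Q = {W. length W \<le> card Q \<and> (\<forall>S\<in>set W. S \<subseteq> Q)}"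

definition edge ::
  "'d set \<Rightarrow> 'q set \<Rightarrow> ('q \<times> 'd op \<times> 'q) set \<Rightarrow> 'q set list \<Rightarrow> 'q set list \<Rightarrow> bool" where
  "edge D Q \<delta> W W' \<longleftrightarrow>
     W \<in> vertices Q \<and> W' \<in> vertices Q \<and> length W' = length W \<and>
     (\<exists>j s s' a. j < length W \<and> s \<in> W ! j \<and> s' \<in> W' ! j \<and> a \<in> D \<and>
        (s, Send a, s') \<in> \<delta> \<and>
        (\<exists>Gen Kill :: nat \<Rightarrow> 'q set.
           (\<forall>i<length W. Gen i \<subseteq> Post_recv \<delta> a (W ! i) \<and>
                          Kill i \<subseteq> Enabled_recv \<delta> a (W ! i)) \<and>
           (\<forall>i<length W. i \<noteq> j \<longrightarrow> W' ! i = (W ! i - Kill i) \<union> Gen i) \<and>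
           (\<exists>U. (U = W ! j \<or> U = W ! j - {s}) \<and>
                W' ! j = (U - Kill j) \<union> Gen j \<union> {s'}) \<and>
           (\<forall>i<length W. \<forall>q\<in>Kill i. Post_recv \<delta> a {q} \<inter> Gen i \<noteq> {})))"

definition is_path ::
  "'d set \<Rightarrow> 'q set \<Rightarrow> ('q \<times> 'd op \<times> 'q) set \<Rightarrow> 'q set list list \<Rightarrow> bool" where
  "is_path D Q \<delta> ps \<longleftrightarrow> ps \<noteq> [] \<and> (\<forall>W\<in>set ps. W \<in> vertices Q) \<and>
     (\<forall>i. Suc i < length ps \<longrightarrow> edge D Q \<delta> (ps ! i) (ps ! Suc i))"

definition tuple_le :: "'q set list \<Rightarrow> 'q set list \<Rightarrow> bool" where
  "tuple_le W W' \<longleftrightarrow> list_all2 (\<subseteq>) W W'"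

(* normal form (0-indexed: m < length ps) *)
definition normal_form :: "'q set list list \<Rightarrow> bool" where
  "normal_form ps \<longleftrightarrow> (\<exists>m<length ps.
     (\<forall>i. Suc i \<le> m \<longrightarrow> tuple_le (ps ! i) (ps ! Suc i)) \<and>
     (\<forall>i. m \<le> i \<and> Suc i < length ps \<longrightarrow> tuple_le (ps ! Suc i) (ps ! i)))"

end

theory Submission
  imports Defs
begin

lemma edge_lift:
  assumes e: "edge D Q \<delta> W W'" and X: "X \<in> vertices Q" "X' \<in> vertices Q"
    "length X = length W" "length X' = length W"
  and h: "\<forall>i<length W. W!i \<subseteq> X!i \<and> W'!i \<subseteq> X'!i \<and> X'!i \<subseteq> X!i \<union> W'!i \<and> X!i - X'!i \<subseteq> W!i - W'!i"
  shows "edge D Q \<delta> X X'"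
proof -
  from e obtain j s s' a Gen Kill U where j: "j < length W" and s: "s \<in> W!j" "s' \<in> W'!j" "a \<in> D" "(s, Send a, s') \<in> \<delta>"
    and GK: "\<forall>i<length W. Gen i \<subseteq> Post_recv \<delta> a (W!i) \<and> Kill i \<subseteq> Enabled_recv \<delta> a (W!i)"
    and oth: "\<forall>i<length W. i\<noteq>j \<longrightarrow> W'!i = (W!i - Kill i) \<union> Gen i"
    and U: "U = W!j \<or> U = W!j - {s}" "W'!j = (U - Kill j) \<union> Gen j \<union> {s'}"
    and P: "\<forall>i<length W. \<forall>q\<in>Kill i. Post_recv \<delta> a {q} \<inter> Gen i \<noteq> {}"
    unfolding edge_def by metis
  define Kill' where "Kill' i = (X!i - X'!i) \<inter> Kill i" for i
  define U' where "U' = (if s \<in> X'!j then X!j else X!j - {s})"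
  have GK': "\<forall>i<length X. Gen i \<subseteq> Post_recv \<delta> a (X!i) \<and> Kill' i \<subseteq> Enabled_recv \<delta> a (X!i)"
  proof (intro allI impI conjI)
    fix i assume i: "i < length X"
    then have sub: "W!i \<subseteq> X!i" using h X by auto
    show "Gen i \<subseteq> Post_recv \<delta> a (X!i)" using GK i X sub unfolding Post_recv_def by fastforce
    show "Kill' i \<subseteq> Enabled_recv \<delta> a (X!i)" using GK i X sub unfolding Kill'_def Enabled_recv_def by fastforce
  qed
  have oth': "\<forall>i<length X. i\<noteq>j \<longrightarrow> X'!i = (X!i - Kill' i) \<union> Gen i"
  proof (intro allI impI)
    fix i assume i: "i < length X" "i \<noteq> j"
    have hi: "W!i \<subseteq> X!i" "W'!i \<subseteq> X'!i" "X'!i \<subseteq> X!i \<union> W'!i" "X!i - X'!i \<subseteq> W!i - W'!i"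
      using h i X by auto
    have oi: "W'!i = (W!i - Kill i) \<union> Gen i" using oth i X by auto
    show "X'!i = (X!i - Kill' i) \<union> Gen i" unfolding Kill'_def using hi oi by blast
  qed
  have Uj: "X'!j = (U' - Kill' j) \<union> Gen j \<union> {s'}"
  proof -
    have hi: "W!j \<subseteq> X!j" "W'!j \<subseteq> X'!j" "X'!j \<subseteq> X!j \<union> W'!j" "X!j - X'!j \<subseteq> W!j - W'!j"
      using h j by auto
    show ?thesis unfolding Kill'_def U'_def using hi U by auto
  qed
  have P': "\<forall>i<length X. \<forall>q\<in>Kill' i. Post_recv \<delta> a {q} \<inter> Gen i \<noteq> {}"
    using P X unfolding Kill'_def by auto
  have sX: "s \<in> X!j" "s' \<in> X'!j" using h j s by auto
  have UU: "(U' = X!j \<or> U' = X!j - {s}) \<and> X'!j = (U' - Kill' j) \<union> Gen j \<union> {s'}"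
    using Uj U'_def by auto
  show ?thesis unfolding edge_def
  proof (intro conjI)
    show "\<exists>j s s' a. j < length X \<and> s \<in> X ! j \<and> s' \<in> X' ! j \<and> a \<in> D \<and> (s, Send a, s') \<in> \<delta> \<and>
        (\<exists>Gen Kill :: nat \<Rightarrow> 'b set.
           (\<forall>i<length X. Gen i \<subseteq> Post_recv \<delta> a (X ! i) \<and> Kill i \<subseteq> Enabled_recv \<delta> a (X ! i)) \<and>
           (\<forall>i<length X. i \<noteq> j \<longrightarrow> X' ! i = (X ! i - Kill i) \<union> Gen i) \<and>
           (\<exists>U. (U = X ! j \<or> U = X ! j - {s}) \<and> X' ! j = (U - Kill j) \<union> Gen j \<union> {s'}) \<and>
           (\<forall>i<length X. \<forall>q\<in>Kill i. Post_recv \<delta> a {q} \<inter> Gen i \<noteq> {}))"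
      apply (rule exI[of _ j], rule exI[of _ s], rule exI[of _ s'], rule exI[of _ a])
      apply (intro conjI)
      using X j sX s apply simp_all
      apply (rule exI[of _ Gen], rule exI[of _ Kill'])
      using GK' oth' UU P' X(3) by (metis Un_insert_right sup_bot.right_neutral)
  qed (use X in auto)
qed


lemma path_len:
  assumes p: "is_path D Q \<delta> ps"
  shows "t < length ps \<Longrightarrow> length (ps!t) = length (ps!0)"
proof (induction t)
  case (Suc t)
  then have "edge D Q \<delta> (ps!t) (ps!Suc t)" using p unfolding is_path_def by auto
  then show ?case using Suc unfolding edge_def by auto
qed simp

lemma nf_exists:
  assumes p: "is_path D Q \<delta> ps"
  shows "\<exists>ps'. is_path D Q \<delta> ps' \<and> normal_form ps' \<and> hd ps' = hd ps \<and> last ps' = last ps"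
proof -
  define n where "n = length ps"
  define L where "L = length (ps!0)"
  have n0: "n > 0" using p unfolding is_path_def n_def by auto
  have len: "\<And>t. t < n \<Longrightarrow> length (ps!t) = L" using path_len[OF p] unfolding n_def L_def by auto
  have vert: "\<And>t. t < n \<Longrightarrow> ps!t \<in> vertices Q" using p unfolding is_path_def n_def by auto
  have pe: "\<And>t. Suc t < n \<Longrightarrow> edge D Q \<delta> (ps!t) (ps!Suc t)" using p unfolding is_path_def n_def by auto
  have Lc: "L \<le> card Q" using vert[OF n0] len[OF n0] unfolding vertices_def by auto
  define Ub where "Ub a b = map (\<lambda>i. \<Union>t\<in>{a..b}. ps!t!i) [0..<L]" for a b
  have Ubl: "length (Ub a b) = L" for a b unfolding Ub_def by simp
  have Ubn: "i < L \<Longrightarrow> Ub a b ! i = (\<Union>t\<in>{a..b}. ps!t!i)" for a b i unfolding Ub_def by simp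
  have Ubm: "a' \<le> a \<Longrightarrow> b \<le> b' \<Longrightarrow> i < L \<Longrightarrow> Ub a b ! i \<subseteq> Ub a' b' ! i" for a b a' b' i
  proof -
    assume "a' \<le> a" "b \<le> b'" "i < L"
    then have "{a..b} \<subseteq> {a'..b'}" by auto
    then show ?thesis using Ubn[OF \<open>i < L\<close>] by (metis UN_mono order_refl)
  qed
  have Uv: "b < n \<Longrightarrow> Ub a b \<in> vertices Q" for a b
  proof -
    assume b: "b < n"
    have "\<forall>S\<in>set (Ub a b). S \<subseteq> Q"
    proof
      fix S assume "S \<in> set (Ub a b)"
      then obtain i where i: "i < L" "S = Ub a b ! i" by (metis Ubl in_set_conv_nth)
      have "ps!t!i \<subseteq> Q" if "t \<in> {a..b}" for t
      proof -
        have "t < n" using that b by auto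
        then have "ps!t!i \<in> set (ps!t)" using len i by auto
        then show ?thesis using vert[OF \<open>t < n\<close>] unfolding vertices_def by auto
      qed
      then show "S \<subseteq> Q" using i Ubn by fastforce
    qed
    then show ?thesis using Lc Ubl unfolding vertices_def by auto
  qed
  have Uaa: "a < n \<Longrightarrow> Ub a a = ps!a" for a
    by (rule nth_equalityI) (auto simp: Ubl len Ubn)
  have grow: "Suc k < n \<Longrightarrow> edge D Q \<delta> (Ub 0 k) (Ub 0 (Suc k))" for k
  proof -
    assume k: "Suc k < n"
    have ii: "{0..Suc k} = insert (Suc k) {0..k}" by auto
    show ?thesis
    proof (rule edge_lift[OF pe[OF k]])
      show "Ub 0 k \<in> vertices Q" "Ub 0 (Suc k) \<in> vertices Q" using Uv k by auto
      show "length (Ub 0 k) = length (ps!k)" "length (Ub 0 (Suc k)) = length (ps!k)" using Ubl len k by auto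
      show "\<forall>i<length (ps ! k). ps ! k ! i \<subseteq> Ub 0 k ! i \<and> ps ! Suc k ! i \<subseteq> Ub 0 (Suc k) ! i \<and>
        Ub 0 (Suc k) ! i \<subseteq> Ub 0 k ! i \<union> ps ! Suc k ! i \<and> Ub 0 k ! i - Ub 0 (Suc k) ! i \<subseteq> ps ! k ! i - ps ! Suc k ! i"
        using k len Ubn ii by auto
    qed
  qed
  have shrink: "Suc d < n \<Longrightarrow> edge D Q \<delta> (Ub d (n-1)) (Ub (Suc d) (n-1))" for d
  proof -
    assume k: "Suc d < n"
    have ii: "{d..n-1} = insert d {Suc d..n-1}" using k by auto
    show ?thesis
    proof (rule edge_lift[OF pe[OF k]])
      show "Ub d (n-1) \<in> vertices Q" "Ub (Suc d) (n-1) \<in> vertices Q" using Uv k by auto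
      show "length (Ub d (n-1)) = length (ps!d)" "length (Ub (Suc d) (n-1)) = length (ps!d)" using Ubl len k by auto
      have a: "Suc d \<in> {Suc d..n-1}" using k by auto
      show "\<forall>i<length (ps ! d). ps ! d ! i \<subseteq> Ub d (n-1) ! i \<and> ps ! Suc d ! i \<subseteq> Ub (Suc d) (n-1) ! i \<and>
        Ub (Suc d) (n-1) ! i \<subseteq> Ub d (n-1) ! i \<union> ps ! Suc d ! i \<and> Ub d (n-1) ! i - Ub (Suc d) (n-1) ! i \<subseteq> ps ! d ! i - ps ! Suc d ! i"
        using k len Ubn ii a by fastforce
    qed
  qed
  define f where "f k = Ub (k - (n-1)) (min k (n-1))" for k
  define ps' where "ps' = map f [0..<2*n-1]"
  have l': "length ps' = 2*n-1" unfolding ps'_def by simp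
  have nth': "k < 2*n-1 \<Longrightarrow> ps'!k = f k" for k unfolding ps'_def by simp
  have fe: "Suc k < 2*n-1 \<Longrightarrow> edge D Q \<delta> (f k) (f (Suc k))" for k
  proof (cases "k < n-1")
    case True
    then show ?thesis using grow[of k] unfolding f_def by (simp add: min_def)
  next
    case False
    assume "Suc k < 2*n-1"
    then have "Suc (k-(n-1)) < n" "Suc k - (n-1) = Suc (k-(n-1))" using False by auto
    moreover have "f k = Ub (k-(n-1)) (n-1)" "f (Suc k) = Ub (Suc (k-(n-1))) (n-1)"
      unfolding f_def using False by (auto simp: min_def Suc_diff_le)
    ultimately show ?thesis using shrink[of "k-(n-1)"] by simp
  qed
  have fv: "f k \<in> vertices Q" for k unfolding f_def using Uv n0 by auto
  have path: "is_path D Q \<delta> ps'"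
    unfolding is_path_def using n0 l' nth' fe fv
    by (auto simp: ps'_def)
  have tl1: "Suc i \<le> n-1 \<Longrightarrow> tuple_le (f i) (f (Suc i))" for i
    unfolding tuple_le_def f_def using Ubl Ubn
    by (auto simp: list_all2_conv_all_nth min_def) (metis atLeastAtMost_iff le_SucI zero_le)
  have tl2: "n-1 \<le> i \<Longrightarrow> tuple_le (f (Suc i)) (f i)" for i
  proof -
    assume i: "n-1 \<le> i"
    then have "f (Suc i) = Ub (Suc (i-(n-1))) (n-1)" "f i = Ub (i-(n-1)) (n-1)" unfolding f_def using n0 by (auto simp: min_def Suc_diff_le)
    then show ?thesis unfolding tuple_le_def using Ubl Ubm
      by (auto simp: list_all2_conv_all_nth)
  qed
  have nf: "normal_form ps'"
    unfolding normal_form_def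
    apply (rule exI[of _ "n-1"])
    using n0 l' nth' tl1 tl2 by auto
  have h: "hd ps' = hd ps"
  proof -
    have "hd ps' = f 0" using n0 by (simp add: ps'_def hd_map upt_conv_Cons)
    also have "\<dots> = ps!0" unfolding f_def using Uaa n0 by simp
    finally show ?thesis using n0 n_def by (simp add: hd_conv_nth)
  qed
  have la: "last ps' = last ps"
  proof -
    have ne: "ps' \<noteq> []" using l' n0 by auto
    have "length ps' - 1 = 2*n-2" using l' by simp
    then have "last ps' = ps'!(2*n-2)" using ne by (simp add: last_conv_nth)
    also have "\<dots> = f (2*n-2)" using nth' n0 by simp
    also have "\<dots> = ps!(n-1)" unfolding f_def using Uaa n0
      by (auto simp: min_def)
    finally show ?thesis using n0 n_def by (simp add: last_conv_nth)
  qed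
  show ?thesis using path nf h la by blast
qed

theorem lemma3:
  fixes D :: "'d set" and Q I :: "'q set" and \<delta> :: "('q \<times> 'd op \<times> 'q) set"
    and V1 V2 :: "'q set list"
  assumes "broadcast_network D Q I \<delta>"
    and "V1 \<in> vertices Q" and "V2 \<in> vertices Q"
  shows "(\<exists>ps. is_path D Q \<delta> ps \<and> hd ps = V1 \<and> last ps = V2) \<longleftrightarrow>
         (\<exists>ps. is_path D Q \<delta> ps \<and> normal_form ps \<and> hd ps = V1 \<and> last ps = V2)"
  using nf_exists by metis

end
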